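(* Let $d\ge 2$ and $c_1\in(0,1]$. There exist constants $C>1$, $c\in(0,1)$ and $0<c'\le C'$, depending only on $d$ and $c_1$, such that the following holds for every finite field $\mathbb F_q$ of characteristic greater than two. Let $E,F\subset\mathbb F_q^d$ and $0\le\alpha\le1$. Assume that the number of distinct lines $l_x$ with $x\in E\setminus\{0\}$ is at least $c_1 q^{-\alpha}|E|$. If $|E||F|\ge Cq^{d+\alpha}$, then there exists a set $E_0\subset E$ with $c' q^{-\alpha}|E|\le|E_0|\le C' q^{-\alpha}|E|$ such that $|\Pi(E_0,F)|\ge c\,q$.
   Context: $\mathbb F_q$ is a finite field with $q$ elements and characteristic greater than two; $\mathbb F_q^*=\mathbb F_q\setminus\{0\}$. For $x\in\mathbb F_q^d\setminus\{0\}$, $l_x=\{sx: s\in\mathbb F_q^*\}$ (the line through the origin and $x$, with the origin removed). For $E,F\subset\mathbb F_q^d$, $\Pi(E,F)=\{x\cdot y: x\in E,\ y\in F\}$ with $x\cdot y=\sum_i x_iy_i$. *)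

theory Defs
  imports Complex_Main "HOL-Algebra.Ring"
begin

text \<open>Vectors of F_q^d are represented as extensional functions on the index set {..<d}
  with values in the carrier of the field.\<close>

definition vecs :: "('a, 'b) ring_scheme \<Rightarrow> nat \<Rightarrow> (nat \<Rightarrow> 'a) set" where
  "vecs R d = {..<d} \<rightarrow>\<^sub>E carrier R"

definition zvec :: "('a, 'b) ring_scheme \<Rightarrow> nat \<Rightarrow> (nat \<Rightarrow> 'a)" where
  "zvec R d = (\<lambda>i\<in>{..<d}. \<zero>\<^bsub>R\<^esub>)"

definition dotp :: "('a, 'b) ring_scheme \<Rightarrow> nat \<Rightarrow> (nat \<Rightarrow> 'a) \<Rightarrow> (nat \<Rightarrow> 'a) \<Rightarrow> 'a" where
  "dotp R d x y = finsum R (\<lambda>i. x i \<otimes>\<^bsub>R\<^esub> y i) {..<d}"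

definition line :: "('a, 'b) ring_scheme \<Rightarrow> nat \<Rightarrow> (nat \<Rightarrow> 'a) \<Rightarrow> (nat \<Rightarrow> 'a) set" where
  "line R d x = {(\<lambda>i\<in>{..<d}. s \<otimes>\<^bsub>R\<^esub> x i) | s. s \<in> carrier R - {\<zero>\<^bsub>R\<^esub>}}"

definition prodset :: "('a, 'b) ring_scheme \<Rightarrow> nat \<Rightarrow> (nat \<Rightarrow> 'a) set \<Rightarrow> (nat \<Rightarrow> 'a) set \<Rightarrow> 'a set" where
  "prodset R d E F = {dotp R d x y | x y. x \<in> E \<and> y \<in> F}"

definition fchar :: "('a, 'b) ring_scheme \<Rightarrow> nat" where
  "fchar R = (if \<exists>n::nat>0. add_pow R n \<one>\<^bsub>R\<^esub> = \<zero>\<^bsub>R\<^esub>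
                  then (LEAST n::nat. n > 0 \<and> add_pow R n \<one>\<^bsub>R\<^esub> = \<zero>\<^bsub>R\<^esub>) else 0)"

end

theory Submission
  imports Defs
begin

definition smul :: "('a, 'b) ring_scheme \<Rightarrow> nat \<Rightarrow> 'a \<Rightarrow> (nat \<Rightarrow> 'a) \<Rightarrow> (nat \<Rightarrow> 'a)" where
  "smul R d s x = (\<lambda>i\<in>{..<d}. s \<otimes>\<^bsub>R\<^esub> x i)"

lemma vecsD: "x \<in> vecs R d \<Longrightarrow> i < d \<Longrightarrow> x i \<in> carrier R"
  unfolding vecs_def by auto

lemma vecsD': "x \<in> vecs R d \<Longrightarrow> \<forall>i<d. x i \<in> carrier R"
  unfolding vecs_def by auto

lemma sum_ind_card: "finite A \<Longrightarrow> (\<Sum>x\<in>A. if P x then 1 else 0 :: real) = real (card {x\<in>A. P x})"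
  by (simp add: sum.inter_filter[symmetric])

lemma cs_sum: fixes f :: "'a \<Rightarrow> real"
  shows "(\<Sum>i\<in>I. f i)\<^sup>2 \<le> real (card I) * (\<Sum>i\<in>I. (f i)\<^sup>2)"
proof (cases "finite I \<and> I \<noteq> {}")
  case True
  define r where "r = (\<Sum>i\<in>I. f i) / real (card I)"
  have c: "real (card I) > 0" using True by auto
  have "0 \<le> (\<Sum>i\<in>I. (f i - r)\<^sup>2)" by (simp add: sum_nonneg)
  also have "\<dots> = (\<Sum>i\<in>I. (f i)\<^sup>2) - 2 * r * (\<Sum>i\<in>I. f i) + r\<^sup>2 * real (card I)"
  proof -
    have "(\<Sum>i\<in>I. (f i - r)\<^sup>2) = (\<Sum>i\<in>I. (f i)\<^sup>2 - (2 * r) * f i + r\<^sup>2)"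
      by (intro sum.cong) (auto simp: power2_eq_square algebra_simps)
    also have "\<dots> = (\<Sum>i\<in>I. (f i)\<^sup>2) - (\<Sum>i\<in>I. (2 * r) * f i) + (\<Sum>i\<in>I. r\<^sup>2)"
      by (simp add: sum.distrib sum_subtractf)
    finally show ?thesis by (simp add: sum_distrib_left[symmetric] sum_distrib_right[symmetric] mult.commute)
  qed
  also have "\<dots> = (\<Sum>i\<in>I. (f i)\<^sup>2) - (\<Sum>i\<in>I. f i)\<^sup>2 / real (card I)"
    using c by (simp add: r_def power2_eq_square field_simps)
  finally show ?thesis using c by (simp add: field_simps)
qed auto

definition nn :: "('a, 'b) ring_scheme \<Rightarrow> nat \<Rightarrow> (nat \<Rightarrow> 'a) set \<Rightarrow> (nat \<Rightarrow> 'a) \<Rightarrow> 'a \<Rightarrow> real" where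
  "nn R d F x t = (\<Sum>y\<in>F. if dotp R d x y = t then 1 else 0)"

definition GG :: "('a, 'b) ring_scheme \<Rightarrow> nat \<Rightarrow> (nat \<Rightarrow> 'a) set \<Rightarrow> (nat \<Rightarrow> 'a) \<Rightarrow> real" where
  "GG R d F x = (\<Sum>y\<in>F. \<Sum>y'\<in>F. if dotp R d x y = dotp R d x y' then 1 else 0)"

lemma sum_ind2: "finite T \<Longrightarrow> a \<in> T \<Longrightarrow>
  (\<Sum>t\<in>T. (if a = t then 1 else 0) * (if b = t then 1 else 0::real)) = (if a = b then 1 else 0)"
proof -
  assume T: "finite T" "a \<in> T"
  have "(\<Sum>t\<in>T. (if a = t then 1 else 0) * (if b = t then 1 else 0::real)) =
        (\<Sum>t\<in>T. if a = t then (if b = a then 1 else 0) else 0)"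
    by (intro sum.cong) auto
  also have "\<dots> = (if a = b then 1 else 0)" using T by auto
  finally show ?thesis .
qed

lemma sum_if_const: "finite A \<Longrightarrow> a \<in> A \<Longrightarrow>
   (\<Sum>y\<in>A. if a = y then P else Q) = P - Q + real (card A) * (Q::real)"
proof -
  assume A: "finite A" "a \<in> A"
  have "(\<Sum>y\<in>A. if a = y then P else Q) = (\<Sum>y\<in>A. Q + (if a = y then P - Q else 0))"
    by (intro sum.cong) auto
  also have "\<dots> = real (card A) * Q + (P - Q)" using A by (simp add: sum.distrib)
  finally show ?thesis by simp
qed

context field begin

lemma dotp_closed: "x \<in> vecs R d \<Longrightarrow> y \<in> vecs R d \<Longrightarrow> dotp R d x y \<in> carrier R"
  unfolding dotp_def by (intro finsum_closed) (auto dest!: vecsD')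

lemma smul_vecs: "s \<in> carrier R \<Longrightarrow> x \<in> vecs R d \<Longrightarrow> smul R d s x \<in> vecs R d"
  unfolding vecs_def smul_def by auto

lemma dotp_smul: assumes "s \<in> carrier R" "x \<in> vecs R d" "y \<in> vecs R d"
  shows "dotp R d (smul R d s x) y = s \<otimes> dotp R d x y"
proof -
  have "dotp R d (smul R d s x) y = (\<Oplus>i\<in>{..<d}. s \<otimes> (x i \<otimes> y i))"
    unfolding dotp_def smul_def
    using vecsD'[OF assms(2)] vecsD'[OF assms(3)] assms(1)
    by (intro finsum_cong') (auto simp: m_assoc)
  also have "\<dots> = s \<otimes> dotp R d x y"
    unfolding dotp_def using vecsD'[OF assms(2)] vecsD'[OF assms(3)] assms(1)
    by (subst finsum_rdistr) auto
  finally show ?thesis .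
qed

lemma dotp_zvec: "y \<in> vecs R d \<Longrightarrow> dotp R d (zvec R d) y = \<zero>"
proof -
  assume y: "y \<in> vecs R d"
  have "dotp R d (zvec R d) y = (\<Oplus>i\<in>{..<d}. \<zero>)"
    unfolding dotp_def zvec_def using vecsD'[OF y] by (intro finsum_cong') auto
  then show ?thesis by simp
qed

lemma zvec_vecs: "zvec R d \<in> vecs R d" unfolding zvec_def vecs_def by auto

lemma dotp_split: assumes "i < d" "x \<in> vecs R d" "y \<in> vecs R d"
  shows "dotp R d x y = x i \<otimes> y i \<oplus> (\<Oplus>j\<in>{..<d}-{i}. x j \<otimes> y j)"
proof -
  have e: "{..<d} = insert i ({..<d}-{i})" using assms by auto
  have c: "\<forall>j<d. x j \<otimes> y j \<in> carrier R" using vecsD'[OF assms(2)] vecsD'[OF assms(3)] by auto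
  show ?thesis unfolding dotp_def
    by (subst e, subst finsum_insert) (use c assms(1) in auto)
qed

lemma key_cancel:
  assumes c: "a \<in> carrier R" "a' \<in> carrier R" "b \<in> carrier R" "b' \<in> carrier R" "S1 \<in> carrier R" "S2 \<in> carrier R"
    and ne: "b \<noteq> b'" and e1: "a \<otimes> b \<oplus> S1 = a \<otimes> b' \<oplus> S2" and e2: "a' \<otimes> b \<oplus> S1 = a' \<otimes> b' \<oplus> S2"
  shows "a = a'"
proof -
  have "(a \<ominus> a') \<otimes> (b \<ominus> b') = ((a \<otimes> b \<oplus> S1) \<ominus> (a \<otimes> b' \<oplus> S2)) \<ominus> ((a' \<otimes> b \<oplus> S1) \<ominus> (a' \<otimes> b' \<oplus> S2))"
    using c by algebra
  also have "\<dots> = \<zero>" using c e1 e2 by (simp add: r_neg minus_eq)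
  finally have "(a \<ominus> a') \<otimes> (b \<ominus> b') = \<zero>" .
  then have "a \<ominus> a' = \<zero> \<or> b \<ominus> b' = \<zero>" using c by (simp add: integral_iff)
  moreover have "b \<ominus> b' \<noteq> \<zero>"
  proof
    assume "b \<ominus> b' = \<zero>"
    then have "b = b \<ominus> (b \<ominus> b')" using c by (simp add: minus_eq)
    also have "\<dots> = b'" using c by algebra
    finally show False using ne by simp
  qed
  ultimately have "a \<ominus> a' = \<zero>" by simp
  then have "a = a \<ominus> (a \<ominus> a')" using c by (simp add: minus_eq)
  also have "\<dots> = a'" using c by algebra
  finally show ?thesis .
qed

lemma card_solutions:
  assumes fin: "finite (carrier R)" and y: "y \<in> vecs R d" "y' \<in> vecs R d" "y \<noteq> y'"
  shows "card {x \<in> vecs R d. dotp R d x y = dotp R d x y'} \<le> card (carrier R) ^ (d - 1)"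
proof -
  obtain i where i: "i < d" "y i \<noteq> y' i"
    using y PiE_ext[of y "{..<d}" "\<lambda>_. carrier R" y'] unfolding vecs_def by auto
  let ?S = "{x \<in> vecs R d. dotp R d x y = dotp R d x y'}"
  let ?h = "\<lambda>x. restrict x ({..<d}-{i})"
  have "inj_on ?h ?S"
  proof (rule inj_onI)
    fix x x' assume x: "x \<in> ?S" and x': "x' \<in> ?S" and h: "?h x = ?h x'"
    have xv: "x \<in> vecs R d" "x' \<in> vecs R d" and ex: "dotp R d x y = dotp R d x y'" "dotp R d x' y = dotp R d x' y'"
      using x x' by auto
    have cx: "\<forall>j<d. x j \<in> carrier R" "\<forall>j<d. x' j \<in> carrier R" "\<forall>j<d. y j \<in> carrier R" "\<forall>j<d. y' j \<in> carrier R"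
      using vecsD'[OF xv(1)] vecsD'[OF xv(2)] vecsD'[OF y(1)] vecsD'[OF y(2)] by auto
    have agree: "\<And>j. j \<in> {..<d}-{i} \<Longrightarrow> x j = x' j"
      using h by (metis restrict_apply')
    let ?A = "(\<Oplus>j\<in>{..<d}-{i}. x j \<otimes> y j)"
    let ?B = "(\<Oplus>j\<in>{..<d}-{i}. x j \<otimes> y' j)"
    have A: "?A \<in> carrier R" by (intro finsum_closed) (use cx in auto)
    have B: "?B \<in> carrier R" by (intro finsum_closed) (use cx in auto)
    have S1: "(\<Oplus>j\<in>{..<d}-{i}. x' j \<otimes> y j) = ?A"
      by (intro finsum_cong') (use cx agree in auto)
    have S2: "(\<Oplus>j\<in>{..<d}-{i}. x' j \<otimes> y' j) = ?B"
      by (intro finsum_cong') (use cx agree in auto)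
    have e1: "x i \<otimes> y i \<oplus> ?A = x i \<otimes> y' i \<oplus> ?B"
      using ex(1) dotp_split[OF i(1) xv(1) y(1)] dotp_split[OF i(1) xv(1) y(2)] by simp
    have e2: "x' i \<otimes> y i \<oplus> ?A = x' i \<otimes> y' i \<oplus> ?B"
      using ex(2) dotp_split[OF i(1) xv(2) y(1)] dotp_split[OF i(1) xv(2) y(2)] S1 S2 by simp
    have xi: "x i = x' i"
      by (rule key_cancel[OF _ _ _ _ A B i(2) e1 e2]) (use cx i(1) in auto)
    have all: "\<And>j. j \<in> {..<d} \<Longrightarrow> x j = x' j"
    proof -
      fix j assume "j \<in> {..<d}"
      then show "x j = x' j" using xi agree[of j] by (cases "j = i") auto
    qed
    show "x = x'"
      using xv unfolding vecs_def by (rule PiE_ext) (rule all)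
  qed
  moreover have "?h ` ?S \<subseteq> ({..<d}-{i}) \<rightarrow>\<^sub>E carrier R"
    by (auto simp: vecs_def PiE_def Pi_def)
  ultimately have "card ?S \<le> card (({..<d}-{i}) \<rightarrow>\<^sub>E carrier R)"
    by (intro card_inj_on_le) (auto intro: finite_PiE fin)
  also have "\<dots> = card (carrier R) ^ (d - 1)"
    using i by (simp add: card_PiE)
  finally show ?thesis .
qed


lemma finite_vecs: "finite (carrier R) \<Longrightarrow> finite (vecs R d)"
  unfolding vecs_def by (intro finite_PiE) auto

lemma card_vecs: "card (vecs R d) = card (carrier R) ^ d"
  unfolding vecs_def by (simp add: card_PiE)

lemma card_carrier2: "finite (carrier R) \<Longrightarrow> card (carrier R) \<ge> 2"
proof -
  assume f: "finite (carrier R)"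
  have "card {\<zero>, \<one>} \<le> card (carrier R)" by (rule card_mono[OF f]) auto
  then show ?thesis by simp
qed

lemma GG_eq: assumes fin: "finite (carrier R)" and F: "F \<subseteq> vecs R d" and x: "x \<in> vecs R d"
  shows "GG R d F x = (\<Sum>t\<in>carrier R. (nn R d F x t)\<^sup>2)"
proof -
  have fF: "finite F" using finite_subset[OF F finite_vecs[OF fin]] .
  have "(\<Sum>t\<in>carrier R. (nn R d F x t)\<^sup>2) = (\<Sum>t\<in>carrier R. \<Sum>y\<in>F. \<Sum>y'\<in>F.
      (if dotp R d x y = t then 1 else 0) * (if dotp R d x y' = t then 1 else 0::real))"
    unfolding nn_def power2_eq_square sum_product by simp
  also have "\<dots> = (\<Sum>y\<in>F. \<Sum>t\<in>carrier R. \<Sum>y'\<in>F.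
      (if dotp R d x y = t then 1 else 0) * (if dotp R d x y' = t then 1 else 0::real))"
    by (rule sum.swap)
  also have "\<dots> = (\<Sum>y\<in>F. \<Sum>y'\<in>F. \<Sum>t\<in>carrier R.
      (if dotp R d x y = t then 1 else 0) * (if dotp R d x y' = t then 1 else 0::real))"
    by (intro sum.cong refl sum.swap)
  also have "\<dots> = GG R d F x" unfolding GG_def
  proof (intro sum.cong refl)
    fix y y' assume y: "y \<in> F" "y' \<in> F"
    show "(\<Sum>t\<in>carrier R. (if dotp R d x y = t then 1 else 0) * (if dotp R d x y' = t then 1 else 0::real))
       = (if dotp R d x y = dotp R d x y' then 1 else 0)"
      by (rule sum_ind2[OF fin dotp_closed[OF x]]) (use F y in auto)
  qed
  finally show ?thesis by simp
qed

lemma sum_nn: assumes fin: "finite (carrier R)" and F: "F \<subseteq> vecs R d" and x: "x \<in> vecs R d"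
  shows "(\<Sum>t\<in>carrier R. nn R d F x t) = real (card F)"
proof -
  have "(\<Sum>t\<in>carrier R. nn R d F x t) = (\<Sum>y\<in>F. \<Sum>t\<in>carrier R. if dotp R d x y = t then 1 else 0)"
    unfolding nn_def by (rule sum.swap)
  also have "\<dots> = (\<Sum>y\<in>F. 1)"
  proof (intro sum.cong refl)
    fix y assume y: "y \<in> F"
    have "dotp R d x y \<in> carrier R" using dotp_closed[OF x, of y] F y by auto
    then show "(\<Sum>t\<in>carrier R. if dotp R d x y = t then 1 else 0) = (1::real)"
      using fin by simp
  qed
  finally show ?thesis by simp
qed

lemma GG_lower: assumes fin: "finite (carrier R)" and F: "F \<subseteq> vecs R d" and x: "x \<in> vecs R d"
  shows "real (card F)^2 / real (card (carrier R)) \<le> GG R d F x"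
proof -
  have q: "real (card (carrier R)) > 0" using card_carrier2[OF fin] by simp
  have "real (card F)^2 \<le> real (card (carrier R)) * GG R d F x"
    using cs_sum[of "nn R d F x" "carrier R"] sum_nn[OF assms] GG_eq[OF assms] by simp
  then show ?thesis using q by (simp add: field_simps)
qed

lemma GG_smul: assumes s: "s \<in> carrier R" "s \<noteq> \<zero>" and F: "F \<subseteq> vecs R d" and x: "x \<in> vecs R d"
  shows "GG R d F (smul R d s x) = GG R d F x"
  unfolding GG_def
proof (intro sum.cong refl)
  fix y y' assume y: "y \<in> F" "y' \<in> F"
  then have yv: "y \<in> vecs R d" "y' \<in> vecs R d" using F by auto
  show "(if dotp R d (smul R d s x) y = dotp R d (smul R d s x) y' then 1 else 0::real) =
        (if dotp R d x y = dotp R d x y' then 1 else 0)"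
    using dotp_smul[OF s(1) x yv(1)] dotp_smul[OF s(1) x yv(2)] m_lcancel[OF s(2) s(1) dotp_closed[OF x yv(1)] dotp_closed[OF x yv(2)]]
    by simp
qed

lemma GG_zvec: assumes F: "F \<subseteq> vecs R d"
  shows "GG R d F (zvec R d) = real (card F)^2"
proof -
  have "GG R d F (zvec R d) = (\<Sum>y\<in>F. \<Sum>y'\<in>F. 1)"
    unfolding GG_def
  proof (intro sum.cong refl)
    fix y y' assume "y \<in> F" "y' \<in> F"
    then have "y \<in> vecs R d" "y' \<in> vecs R d" using F by auto
    then show "(if dotp R d (zvec R d) y = dotp R d (zvec R d) y' then 1 else 0) = (1::real)"
      by (simp add: dotp_zvec)
  qed
  then show ?thesis by (simp add: power2_eq_square)
qed

lemma sum_GG: assumes fin: "finite (carrier R)" and F: "F \<subseteq> vecs R d"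
  shows "(\<Sum>x\<in>vecs R d. GG R d F x) \<le>
    real (card F) * (real (card (carrier R))^d - real (card (carrier R))^(d-1))
    + real (card F)^2 * real (card (carrier R))^(d-1)"
proof -
  let ?Q = "real (card (carrier R))"
  have fF: "finite F" using finite_subset[OF F finite_vecs[OF fin]] .
  have fV: "finite (vecs R d)" using finite_vecs[OF fin] .
  have "(\<Sum>x\<in>vecs R d. GG R d F x) = (\<Sum>y\<in>F. \<Sum>x\<in>vecs R d. \<Sum>y'\<in>F. if dotp R d x y = dotp R d x y' then 1 else 0)"
    unfolding GG_def by (rule sum.swap)
  also have "\<dots> = (\<Sum>y\<in>F. \<Sum>y'\<in>F. \<Sum>x\<in>vecs R d. if dotp R d x y = dotp R d x y' then 1 else 0)"
    by (intro sum.cong refl sum.swap)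
  also have "\<dots> \<le> (\<Sum>y\<in>F. \<Sum>y'\<in>F. if y = y' then ?Q^d else ?Q^(d-1))"
  proof (intro sum_mono)
    fix y y' assume y: "y \<in> F" "y' \<in> F"
    then have yv: "y \<in> vecs R d" "y' \<in> vecs R d" using F by auto
    have e: "(\<Sum>x\<in>vecs R d. if dotp R d x y = dotp R d x y' then 1 else 0) =
          real (card {x \<in> vecs R d. dotp R d x y = dotp R d x y'})"
      by (rule sum_ind_card[OF fV])
    show "(\<Sum>x\<in>vecs R d. if dotp R d x y = dotp R d x y' then 1 else 0) \<le> (if y = y' then ?Q^d else ?Q^(d-1))"
    proof (cases "y = y'")
      case True
      then show ?thesis unfolding e by (simp add: card_vecs)
    next
      case False
      have "card {x \<in> vecs R d. dotp R d x y = dotp R d x y'} \<le> card (carrier R) ^ (d - 1)"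
        by (rule card_solutions[OF fin yv False])
      then have "real (card {x \<in> vecs R d. dotp R d x y = dotp R d x y'}) \<le> ?Q ^ (d - 1)"
        by (simp only: of_nat_power[symmetric] of_nat_le_iff)
      then show ?thesis unfolding e using False by simp
    qed
  qed
  also have "\<dots> = (\<Sum>y\<in>F. ?Q^d - ?Q^(d-1) + real (card F) * ?Q^(d-1))"
    by (intro sum.cong refl sum_if_const[OF fF])
  also have "\<dots> = real (card F) * (?Q^d - ?Q^(d-1)) + real (card F)^2 * ?Q^(d-1)"
    by (simp add: algebra_simps power2_eq_square)
  finally show ?thesis .
qed


lemma dev_all: assumes fin: "finite (carrier R)" and F: "F \<subseteq> vecs R d" and d: "d \<ge> 1"
  shows "(\<Sum>x\<in>vecs R d - {zvec R d}. GG R d F x - real (card F)^2 / real (card (carrier R)))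
     \<le> real (card F) * real (card (carrier R))^(d-1) * (real (card (carrier R)) - 1)"
proof -
  let ?Q = "real (card (carrier R))" and ?P = "real (card (carrier R))^(d-1)" and ?F = "real (card F)"
  have fV: "finite (vecs R d)" using finite_vecs[OF fin] .
  have Q: "?Q \<ge> 2" using card_carrier2[OF fin] by simp
  have QP: "?Q^d = ?Q * ?P" using d by (metis One_nat_def Suc_pred' less_eq_Suc_le power_Suc)
  have cV: "card (vecs R d - {zvec R d}) = card (carrier R)^d - 1"
    using card_vecs zvec_vecs fV by (simp add: card_Diff_singleton)
  have cV': "real (card (vecs R d - {zvec R d})) = ?Q^d - 1"
  proof -
    have "card (carrier R)^d \<ge> 1" using card_carrier2[OF fin] by simp
    then show ?thesis unfolding cV by (simp add: of_nat_diff)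
  qed
  have "(\<Sum>x\<in>vecs R d. GG R d F x) = GG R d F (zvec R d) + (\<Sum>x\<in>vecs R d - {zvec R d}. GG R d F x)"
    using fV zvec_vecs by (simp add: sum.remove)
  then have s: "(\<Sum>x\<in>vecs R d - {zvec R d}. GG R d F x) \<le> ?F * (?Q^d - ?P) + ?F^2 * ?P - ?F^2"
    using sum_GG[OF fin F] GG_zvec[OF F] by simp
  have "(\<Sum>x\<in>vecs R d - {zvec R d}. GG R d F x - ?F^2 / ?Q)
     = (\<Sum>x\<in>vecs R d - {zvec R d}. GG R d F x) - (?Q^d - 1) * (?F^2 / ?Q)"
    by (simp add: sum_subtractf cV')
  also have "\<dots> \<le> ?F * (?Q^d - ?P) + ?F^2 * ?P - ?F^2 - (?Q^d - 1) * (?F^2 / ?Q)"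
    using s by simp
  also have "\<dots> = ?F * ?P * (?Q - 1) - ?F^2 + ?F^2 / ?Q"
    using Q unfolding QP by (simp add: field_simps)
  also have "\<dots> \<le> ?F * ?P * (?Q - 1)"
  proof -
    have "?F^2 * 1 \<le> ?F^2 * ?Q" by (rule mult_left_mono) (use Q in auto)
    then have "?F^2 / ?Q \<le> ?F^2" using Q by (simp add: divide_le_eq)
    then show ?thesis by simp
  qed
  finally show ?thesis .
qed

lemma line_eq: "line R d x = (\<lambda>s. smul R d s x) ` (carrier R - {\<zero>})"
  unfolding line_def smul_def by auto

lemma nonzero_coord: assumes "x \<in> vecs R d" "x \<noteq> zvec R d" obtains i where "i < d" "x i \<noteq> \<zero>"
proof -
  have "\<exists>i<d. x i \<noteq> \<zero>"
  proof (rule ccontr)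
    assume "\<not> (\<exists>i<d. x i \<noteq> \<zero>)"
    then have "x = zvec R d" using assms(1) zvec_vecs unfolding vecs_def
      by (intro PiE_ext[of x "{..<d}" "\<lambda>_. carrier R"]) (auto simp: zvec_def)
    then show False using assms(2) by simp
  qed
  then show ?thesis using that by blast
qed

lemma card_line: assumes x: "x \<in> vecs R d" "x \<noteq> zvec R d"
  shows "card (line R d x) = card (carrier R) - 1"
proof -
  obtain i where i: "i < d" "x i \<noteq> \<zero>" using nonzero_coord[OF x] by blast
  have xi: "x i \<in> carrier R" using vecsD[OF x(1) i(1)] .
  have "inj_on (\<lambda>s. smul R d s x) (carrier R - {\<zero>})"
  proof (rule inj_onI)
    fix s s' assume s: "s \<in> carrier R - {\<zero>}" "s' \<in> carrier R - {\<zero>}" and e: "smul R d s x = smul R d s' x"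
    have "s \<otimes> x i = s' \<otimes> x i" using fun_cong[OF e, of i] i(1) by (simp add: smul_def)
    then show "s = s'" using m_rcancel[OF i(2) xi, of s s'] s by simp
  qed
  then have "card (line R d x) = card (carrier R - {\<zero>})" unfolding line_eq by (rule card_image)
  then show ?thesis by (simp add: card_Diff_singleton)
qed

lemma line_sub: assumes x: "x \<in> vecs R d" "x \<noteq> zvec R d"
  shows "line R d x \<subseteq> vecs R d - {zvec R d}"
proof
  fix z assume "z \<in> line R d x"
  then obtain s where s: "s \<in> carrier R" "s \<noteq> \<zero>" and z: "z = smul R d s x" unfolding line_eq by auto
  obtain i where i: "i < d" "x i \<noteq> \<zero>" using nonzero_coord[OF x] by blast
  have xi: "x i \<in> carrier R" using vecsD[OF x(1) i(1)] .
  have "z i \<noteq> \<zero>" using z i s xi by (simp add: smul_def integral_iff)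
  moreover have "zvec R d i = \<zero>" using i by (simp add: zvec_def)
  ultimately have "z \<noteq> zvec R d" by auto
  then show "z \<in> vecs R d - {zvec R d}" using z smul_vecs[OF s(1) x(1)] by simp
qed

lemma GG_line: assumes F: "F \<subseteq> vecs R d" and x: "x \<in> vecs R d" and z: "z \<in> line R d x"
  shows "GG R d F z = GG R d F x"
  using z GG_smul[OF _ _ F x] unfolding line_eq by auto

lemma line_sub2: assumes x: "x \<in> vecs R d" "x' \<in> vecs R d"
  and z: "z \<in> line R d x" "z \<in> line R d x'"
  shows "line R d x \<subseteq> line R d x'"
proof
  obtain s where s: "s \<in> carrier R" "s \<noteq> \<zero>" and zs: "z = smul R d s x" using z(1) unfolding line_eq by auto
  obtain s' where s': "s' \<in> carrier R" "s' \<noteq> \<zero>" and zs': "z = smul R d s' x'" using z(2) unfolding line_eq by auto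
  have su: "s \<in> Units R" using s field_Units by auto
  have iv: "inv s \<in> carrier R" "inv s \<otimes> s = \<one>" using su by auto
  have isn: "inv s \<noteq> \<zero>" using iv s by auto
  fix w assume "w \<in> line R d x"
  then obtain t where t: "t \<in> carrier R" "t \<noteq> \<zero>" and wt: "w = smul R d t x" unfolding line_eq by auto
  define u where "u = t \<otimes> inv s \<otimes> s'"
  have uc: "u \<in> carrier R" unfolding u_def using t iv s' by auto
  have un: "u \<noteq> \<zero>" unfolding u_def using t iv isn s' by (simp add: integral_iff)
  have key: "t \<otimes> x i = u \<otimes> x' i" if i: "i < d" for i
  proof -
    have xi: "x i \<in> carrier R" "x' i \<in> carrier R" using vecsD[OF x(1) i] vecsD[OF x(2) i] by auto
    have eq: "s \<otimes> x i = s' \<otimes> x' i" using fun_cong[OF zs, of i] fun_cong[OF zs', of i] i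
      by (simp add: smul_def)
    have "u \<otimes> x' i = t \<otimes> (inv s \<otimes> (s' \<otimes> x' i))" unfolding u_def using t iv s' xi by (simp add: m_assoc)
    also have "\<dots> = t \<otimes> (inv s \<otimes> (s \<otimes> x i))" by (simp add: eq)
    also have "inv s \<otimes> (s \<otimes> x i) = x i" using iv s xi by (simp add: m_assoc[symmetric])
    finally show ?thesis by simp
  qed
  have "w = smul R d u x'" unfolding wt smul_def by (intro restrict_ext) (simp add: key)
  then show "w \<in> line R d x'" unfolding line_eq using uc un by auto
qed

lemma line_disj: assumes x: "x \<in> vecs R d" "x' \<in> vecs R d" and ne: "line R d x \<noteq> line R d x'"
  shows "line R d x \<inter> line R d x' = {}"
proof (rule ccontr)
  assume "line R d x \<inter> line R d x' \<noteq> {}"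
  then obtain z where "z \<in> line R d x" "z \<in> line R d x'" by auto
  then have "line R d x \<subseteq> line R d x'" "line R d x' \<subseteq> line R d x"
    using line_sub2[OF x] line_sub2[OF x(2) x(1)] by auto
  then show False using ne by auto
qed


lemma dev_E0: assumes fin: "finite (carrier R)" and F: "F \<subseteq> vecs R d" and d: "d \<ge> 1"
  and E0: "E0 \<subseteq> vecs R d - {zvec R d}"
  and dl: "\<forall>x\<in>E0. \<forall>x'\<in>E0. x \<noteq> x' \<longrightarrow> line R d x \<noteq> line R d x'"
  shows "(\<Sum>x\<in>E0. GG R d F x - real (card F)^2 / real (card (carrier R)))
     \<le> real (card F) * real (card (carrier R))^(d-1)"
proof -
  let ?Q = "real (card (carrier R))"
  define dev where "dev x = GG R d F x - real (card F)^2 / ?Q" for x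
  have fV: "finite (vecs R d)" using finite_vecs[OF fin] .
  have fE: "finite E0" using finite_subset[OF E0] fV by auto
  have Q: "?Q \<ge> 2" using card_carrier2[OF fin] by simp
  have nonneg: "\<And>z. z \<in> vecs R d \<Longrightarrow> dev z \<ge> 0" unfolding dev_def using GG_lower[OF fin F] by simp
  have cl: "real (card (line R d x)) = ?Q - 1" if "x \<in> E0" for x
  proof -
    have "card (line R d x) = card (carrier R) - 1" using card_line that E0 by auto
    then show ?thesis using card_carrier2[OF fin] by (simp add: of_nat_diff)
  qed
  have "(?Q - 1) * (\<Sum>x\<in>E0. dev x) = (\<Sum>x\<in>E0. \<Sum>z\<in>line R d x. dev z)"
    unfolding sum_distrib_left
  proof (intro sum.cong refl)
    fix x assume x: "x \<in> E0"
    have "(\<Sum>z\<in>line R d x. dev z) = (\<Sum>z\<in>line R d x. dev x)"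
      using GG_line[OF F] x E0 unfolding dev_def by auto
    also have "\<dots> = (?Q - 1) * dev x" using cl[OF x] by simp
    finally show "(?Q - 1) * dev x = (\<Sum>z\<in>line R d x. dev z)" by simp
  qed
  also have "\<dots> = (\<Sum>z\<in>(\<Union>x\<in>E0. line R d x). dev z)"
  proof (rule sum.UNION_disjoint[symmetric])
    show "finite E0" by (rule fE)
    show "\<forall>x\<in>E0. finite (line R d x)"
    proof
      fix x assume "x \<in> E0"
      then have "line R d x \<subseteq> vecs R d" using line_sub E0 by blast
      then show "finite (line R d x)" using fV finite_subset by blast
    qed
    show "\<forall>x\<in>E0. \<forall>x'\<in>E0. x \<noteq> x' \<longrightarrow> line R d x \<inter> line R d x' = {}"
      using dl line_disj E0 by blast
  qed
  also have "\<dots> \<le> (\<Sum>z\<in>vecs R d - {zvec R d}. dev z)"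
  proof (rule sum_mono2)
    show "finite (vecs R d - {zvec R d})" using fV by simp
    show "(\<Union>x\<in>E0. line R d x) \<subseteq> vecs R d - {zvec R d}" using line_sub E0 by blast
    show "\<And>b. b \<in> vecs R d - {zvec R d} - (\<Union>x\<in>E0. line R d x) \<Longrightarrow> 0 \<le> dev b" using nonneg by blast
  qed
  also have "\<dots> \<le> real (card F) * ?Q^(d-1) * (?Q - 1)"
    using dev_all[OF fin F d] unfolding dev_def .
  finally have "(?Q - 1) * (\<Sum>x\<in>E0. dev x) \<le> (?Q - 1) * (real (card F) * ?Q^(d-1))" by (simp add: algebra_simps)
  then show ?thesis unfolding dev_def using Q by (simp add: mult_le_cancel_left)
qed

lemma main_count: assumes fin: "finite (carrier R)" and F: "F \<subseteq> vecs R d" and d: "d \<ge> 1"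
  and E0: "E0 \<subseteq> vecs R d - {zvec R d}"
  and dl: "\<forall>x\<in>E0. \<forall>x'\<in>E0. x \<noteq> x' \<longrightarrow> line R d x \<noteq> line R d x'"
  shows "(real (card E0) * real (card F))^2 \<le> real (card (prodset R d E0 F)) *
     ((real (card E0) * real (card F))^2 / real (card (carrier R))
       + real (card E0) * real (card F) * real (card (carrier R))^(d-1))"
proof -
  let ?Q = "real (card (carrier R))" and ?P = "prodset R d E0 F"
  define nu where "nu t = (\<Sum>x\<in>E0. nn R d F x t)" for t
  have fV: "finite (vecs R d)" using finite_vecs[OF fin] .
  have fE: "finite E0" using finite_subset[OF E0] fV by auto
  have fF: "finite F" using finite_subset[OF F fV] .
  have Q: "?Q \<ge> 2" using card_carrier2[OF fin] by simp
  have E0v: "\<And>x. x \<in> E0 \<Longrightarrow> x \<in> vecs R d" using E0 by auto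
  have Fv: "\<And>y. y \<in> F \<Longrightarrow> y \<in> vecs R d" using F by auto
  have Psub: "?P \<subseteq> carrier R" unfolding prodset_def using E0v Fv dotp_closed by blast
  have fP: "finite ?P" using finite_subset[OF Psub fin] .
  have nnn: "\<And>x t. nn R d F x t \<ge> 0" unfolding nn_def by (intro sum_nonneg) auto
  have s1: "(\<Sum>t\<in>carrier R. nu t) = real (card E0) * real (card F)"
    unfolding nu_def by (subst sum.swap) (simp add: sum_nn[OF fin F] E0v)
  have s0: "nu t = 0" if t: "t \<notin> ?P" for t
    unfolding nu_def nn_def
  proof (rule sum.neutral, rule ballI)
    fix x assume x: "x \<in> E0"
    show "(\<Sum>y\<in>F. if dotp R d x y = t then 1 else 0) = (0::real)"
    proof (rule sum.neutral, rule ballI)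
      fix y assume "y \<in> F"
      then have "dotp R d x y \<in> ?P" using x unfolding prodset_def by blast
      then show "(if dotp R d x y = t then 1 else 0) = (0::real)" using t by auto
    qed
  qed
  have s2: "(\<Sum>t\<in>?P. nu t) = (\<Sum>t\<in>carrier R. nu t)"
    by (rule sum.mono_neutral_left[OF fin Psub]) (use s0 in auto)
  have s3: "(\<Sum>t\<in>?P. nu t)^2 \<le> real (card ?P) * (\<Sum>t\<in>?P. (nu t)^2)" by (rule cs_sum)
  have s4: "(\<Sum>t\<in>?P. (nu t)^2) \<le> (\<Sum>t\<in>carrier R. (nu t)^2)"
    by (rule sum_mono2[OF fin Psub]) auto
  have s5: "(nu t)^2 \<le> real (card E0) * (\<Sum>x\<in>E0. (nn R d F x t)^2)" for t
    unfolding nu_def by (rule cs_sum)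
  have s6: "(\<Sum>t\<in>carrier R. (nu t)^2) \<le> real (card E0) * (\<Sum>x\<in>E0. GG R d F x)"
  proof -
    have sw: "(\<Sum>t\<in>carrier R. \<Sum>x\<in>E0. (nn R d F x t)^2) = (\<Sum>x\<in>E0. \<Sum>t\<in>carrier R. (nn R d F x t)^2)"
      by (rule sum.swap)
    have "(\<Sum>t\<in>carrier R. (nu t)^2) \<le> (\<Sum>t\<in>carrier R. real (card E0) * (\<Sum>x\<in>E0. (nn R d F x t)^2))"
      by (rule sum_mono) (rule s5)
    also have "\<dots> = real (card E0) * (\<Sum>t\<in>carrier R. \<Sum>x\<in>E0. (nn R d F x t)^2)"
      by (simp add: sum_distrib_left)
    also have "\<dots> = real (card E0) * (\<Sum>x\<in>E0. \<Sum>t\<in>carrier R. (nn R d F x t)^2)"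
      using sw by simp
    also have "\<dots> = real (card E0) * (\<Sum>x\<in>E0. GG R d F x)"
      using GG_eq[OF fin F] E0v by (intro arg_cong[where f="\<lambda>s. real (card E0) * s"] sum.cong) auto
    finally show ?thesis .
  qed
  have s7: "(\<Sum>x\<in>E0. GG R d F x) \<le> real (card E0) * real (card F)^2 / ?Q + real (card F) * ?Q^(d-1)"
    using dev_E0[OF fin F d E0 dl] by (simp add: sum_subtractf)
  let ?X = "real (card E0) * real (card F)"
  have "?X^2 = (\<Sum>t\<in>?P. nu t)^2" using s1 s2 by simp
  also have "\<dots> \<le> real (card ?P) * (\<Sum>t\<in>?P. (nu t)^2)" by (rule s3)
  also have "\<dots> \<le> real (card ?P) * (\<Sum>t\<in>carrier R. (nu t)^2)"
    by (rule mult_left_mono[OF s4]) simp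
  also have "\<dots> \<le> real (card ?P) * (real (card E0) * (\<Sum>x\<in>E0. GG R d F x))"
    by (rule mult_left_mono[OF s6]) simp
  also have "\<dots> \<le> real (card ?P) * (real (card E0) * (real (card E0) * real (card F)^2 / ?Q + real (card F) * ?Q^(d-1)))"
    by (intro mult_left_mono s7) auto
  also have "\<dots> = real (card ?P) * (?X^2 / ?Q + ?X * ?Q^(d-1))"
    by (simp add: power2_eq_square algebra_simps)
  finally show ?thesis .
qed

end

theorem lemma4p1:
  fixes d :: nat and c1 :: real
  assumes "d \<ge> 2" and "0 < c1" and "c1 \<le> 1"
  shows "\<exists>C c c' C' :: real. C > 1 \<and> 0 < c \<and> c < 1 \<and> 0 < c' \<and> c' \<le> C' \<and>
    (\<forall>(R :: nat ring) (E :: (nat \<Rightarrow> nat) set) (F :: (nat \<Rightarrow> nat) set) (\<alpha> :: real).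
       field R \<longrightarrow> finite (carrier R) \<longrightarrow> fchar R > 2 \<longrightarrow>
       E \<subseteq> vecs R d \<longrightarrow> F \<subseteq> vecs R d \<longrightarrow> 0 \<le> \<alpha> \<longrightarrow> \<alpha> \<le> 1 \<longrightarrow>
       real (card {line R d x | x. x \<in> E - {zvec R d}})
         \<ge> c1 * real (card (carrier R)) powr (- \<alpha>) * real (card E) \<longrightarrow>
       real (card E) * real (card F) \<ge> C * real (card (carrier R)) powr (real d + \<alpha>) \<longrightarrow>
       (\<exists>E0. E0 \<subseteq> E \<and>
          c' * real (card (carrier R)) powr (- \<alpha>) * real (card E) \<le> real (card E0) \<and>
          real (card E0) \<le> C' * real (card (carrier R)) powr (- \<alpha>) * real (card E) \<and>
          real (card (prodset R d E0 F)) \<ge> c * real (card (carrier R))))"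
proof -
  define C :: real where "C = 2 / c1"
  have C1: "C > 1" using assms unfolding C_def by (simp add: field_simps)
  have c1C: "c1 * C = 2" using assms unfolding C_def by simp
  show ?thesis
  proof (rule exI[of _ C], rule exI[of _ "1/2"], rule exI[of _ c1], rule exI[of _ "2*c1"], intro conjI allI impI)
    fix R :: "nat ring" and E F :: "(nat \<Rightarrow> nat) set" and \<alpha> :: real
    assume fR: "field R" and fin: "finite (carrier R)" and ch: "fchar R > 2"
      and EV: "E \<subseteq> vecs R d" and FV: "F \<subseteq> vecs R d" and a0: "0 \<le> \<alpha>" and a1: "\<alpha> \<le> 1"
      and lines: "real (card {line R d x |x. x \<in> E - {zvec R d}}) \<ge> c1 * real (card (carrier R)) powr (-\<alpha>) * real (card E)"
      and big: "real (card E) * real (card F) \<ge> C * real (card (carrier R)) powr (real d + \<alpha>)"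
    define q where "q = real (card (carrier R))"
    define pa where "pa = q powr \<alpha>"
    have q2: "q \<ge> 2" unfolding q_def using field.card_carrier2[OF fR fin] by simp
    have pa0: "pa > 0" unfolding pa_def using q2 by simp
    have pminus: "q powr (-\<alpha>) = 1 / pa" unfolding pa_def using q2 by (simp add: powr_minus divide_inverse)
    have pplus: "q powr (real d + \<alpha>) = q^d * pa" unfolding pa_def using q2 by (simp add: powr_add powr_realpow)
    have fV: "finite (vecs R d)" using field.finite_vecs[OF fR fin] .
    have cF: "real (card F) \<le> q^d"
    proof -
      have "card F \<le> card (vecs R d)" by (rule card_mono[OF fV FV])
      then show ?thesis unfolding q_def field.card_vecs[OF fR] by (simp only: of_nat_power[symmetric] of_nat_le_iff)
    qed
    have qd: "q^d > 0" using q2 by simp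
    define K where "K = c1 * real (card E) / pa"
    have big': "real (card E) * real (card F) \<ge> C * q^d * pa" using big pplus unfolding q_def by simp
    have "real (card E) * q^d \<ge> C * pa * q^d"
    proof -
      have "real (card E) * real (card F) \<le> real (card E) * q^d" by (rule mult_left_mono[OF cF]) simp
      then show ?thesis using big' by (simp add: algebra_simps)
    qed
    then have cE: "real (card E) \<ge> C * pa" using qd by simp
    have K2: "K \<ge> 2"
    proof -
      have "c1 * (C * pa) \<le> c1 * real (card E)" by (rule mult_left_mono[OF cE]) (use assms in simp)
      moreover have "c1 * (C * pa) = 2 * pa" using c1C by (simp add: mult.assoc[symmetric])
      ultimately have "2 * pa \<le> c1 * real (card E)" by linarith
      then show ?thesis unfolding K_def using pa0 by (simp add: field_simps)
    qed
    have Keq: "c1 * q powr (-\<alpha>) * real (card E) = K" unfolding K_def pminus by simp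
    define L where "L = {line R d x |x. x \<in> E - {zvec R d}}"
    define k where "k = nat \<lceil>K\<rceil>"
    have kr: "real k = of_int \<lceil>K\<rceil>" unfolding k_def using K2 by simp
    have kK: "real k \<ge> K" "real k \<le> K + 1" unfolding kr
      by (rule le_of_int_ceiling) (rule of_int_ceiling_le_add_one)
    have kL: "k \<le> card L"
    proof -
      have h: "K \<le> real (card L)" using lines Keq unfolding L_def q_def by simp
      then have "\<lceil>K\<rceil> \<le> int (card L)" by (intro ceiling_le) simp
      then show ?thesis unfolding k_def by (simp add: nat_le_iff)
    qed
    obtain L0 where L0: "L0 \<subseteq> L" "card L0 = k" "finite L0"
      using obtain_subset_with_card_n[OF kL] by blast
    define rep where "rep l = (SOME x. x \<in> E - {zvec R d} \<and> line R d x = l)" for l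
    have rep: "rep l \<in> E - {zvec R d} \<and> line R d (rep l) = l" if "l \<in> L" for l
    proof -
      have "\<exists>x. x \<in> E - {zvec R d} \<and> line R d x = l" using that unfolding L_def by blast
      then show ?thesis unfolding rep_def by (rule someI_ex)
    qed
    define E0 where "E0 = rep ` L0"
    have inj: "inj_on rep L0"
    proof (rule inj_onI)
      fix l l' assume "l \<in> L0" "l' \<in> L0" "rep l = rep l'"
      then show "l = l'" using rep[of l] rep[of l'] L0(1) by auto
    qed
    have cE0: "card E0 = k" unfolding E0_def using card_image[OF inj] L0 by simp
    have E0E': "x \<in> E - {zvec R d}" if xE0: "x \<in> E0" for x
    proof -
      obtain l where "l \<in> L0" "x = rep l" using xE0 unfolding E0_def by blast
      then show ?thesis using rep[of l] L0(1) by auto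
    qed
    have E0E: "E0 \<subseteq> E" using E0E' by auto
    have E0V: "E0 \<subseteq> vecs R d - {zvec R d}" using E0E' EV by auto
    have dl: "\<forall>x\<in>E0. \<forall>x'\<in>E0. x \<noteq> x' \<longrightarrow> line R d x \<noteq> line R d x'"
    proof (intro ballI impI)
      fix x x' assume xx: "x \<in> E0" "x' \<in> E0" "x \<noteq> x'"
      then obtain l l' where ll: "l \<in> L0" "l' \<in> L0" "x = rep l" "x' = rep l'" unfolding E0_def by blast
      have "l \<in> L" "l' \<in> L" using ll L0(1) by auto
      then have "line R d x = l" "line R d x' = l'" using rep ll by auto
      moreover have "l \<noteq> l'" using ll xx(3) by auto
      ultimately show "line R d x \<noteq> line R d x'" by simp
    qed
    have d1: "d \<ge> 1" using assms by simp
    define X where "X = real (card E0) * real (card F)"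
    define P where "P = real (card (prodset R d E0 F))"
    have mc: "X^2 \<le> P * (X^2 / q + X * q^(d-1))"
      using field.main_count[OF fR fin FV d1 E0V dl] unfolding X_def P_def q_def .
    have X2: "X \<ge> 2 * q^d"
    proof -
      have "2 * q^d = c1 * (C * q^d * pa) / pa" using pa0 c1C by (simp add: field_simps)
      also have "\<dots> \<le> c1 * (real (card E) * real (card F)) / pa"
        using big' assms pa0 by (intro divide_right_mono mult_left_mono) auto
      also have "\<dots> = K * real (card F)" unfolding K_def by simp
      also have "\<dots> \<le> X" unfolding X_def cE0 by (rule mult_right_mono[OF kK(1)]) simp
      finally show ?thesis .
    qed
    have Xpos: "X > 0" using X2 qd by linarith
    have qd1: "q^d = q * q^(d-1)" using d1 by (metis One_nat_def Suc_pred' less_eq_Suc_le power_Suc)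
    have h: "X * q^(d-1) \<le> X * (X / 2) / q"
    proof -
      have "q^(d-1) \<le> (X/2) / q" using X2 qd1 q2 by (simp add: field_simps)
      then have "X * q^(d-1) \<le> X * ((X/2) / q)" using Xpos by (intro mult_left_mono) auto
      then show ?thesis by simp
    qed
    have "X^2 \<le> P * (X^2 / q + X * (X / 2) / q)"
    proof -
      have "P * (X^2 / q + X * q^(d-1)) \<le> P * (X^2 / q + X * (X / 2) / q)"
        by (rule mult_left_mono) (use h P_def in auto)
      then show ?thesis using mc by linarith
    qed
    also have "\<dots> = X^2 * (3 * P / (2 * q))" using q2 by (simp add: field_simps power2_eq_square)
    finally have "X^2 * 1 \<le> X^2 * (3 * P / (2 * q))" by simp
    then have "1 \<le> 3 * P / (2 * q)" by (rule mult_left_le_imp_le) (use Xpos in simp)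
    then have "2 * q \<le> 3 * P" using q2 by (simp add: field_simps)
    then have "1/2 * q \<le> P" using q2 by linarith
    then show "\<exists>E0. E0 \<subseteq> E \<and>
          c1 * real (card (carrier R)) powr (- \<alpha>) * real (card E) \<le> real (card E0) \<and>
          real (card E0) \<le> 2 * c1 * real (card (carrier R)) powr (- \<alpha>) * real (card E) \<and>
          real (card (prodset R d E0 F)) \<ge> 1/2 * real (card (carrier R))"
    proof (intro exI[of _ E0] conjI)
      show "E0 \<subseteq> E" by (rule E0E)
      show "c1 * real (card (carrier R)) powr (- \<alpha>) * real (card E) \<le> real (card E0)"
        using Keq kK cE0 unfolding q_def by simp
      show "real (card E0) \<le> 2 * c1 * real (card (carrier R)) powr (- \<alpha>) * real (card E)"
        using Keq kK cE0 K2 unfolding q_def by simp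
    qed (use P_def q_def in simp)
  qed (use assms C1 in auto)
qed

end
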